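(* Let $a\geq 2$ and $0\leq b<a$ be integers, and let $\mathbb{L}$ be a skew field. Let $B$ be a $b$-space of $\mathrm{PG}(a,\mathbb{L})$, let $B_1,B_2$ be subspaces of $\mathrm{PG}(a,\mathbb{L})$ of dimension at most $b-1$, and let $B_3$ be a subspace of dimension at most $b-2$ (if $b=0$, $B_3$ is the empty subspace). Then there exists an $(a-b-1)$-space $C$ of $\mathrm{PG}(a,\mathbb{L})$ that is disjoint from $B\cup B_1\cup B_2\cup B_3$ (i.e. shares no point with it).
   Context: $\mathrm{PG}(a,\mathbb{L})$ is the projective space of an $(a+1)$-dimensional vector space over $\mathbb{L}$; an $m$-space is an $(m+1)$-dimensional vector subspace, viewed as its set of points ($1$-dimensional subspaces); the empty subspace has dimension $-1$. *)

theory Defs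
  imports Main
begin

text \<open>PG(a,L) over a skew field L (type class division_ring): the underlying
(a+1)-dimensional left vector space is modelled as the functions nat => L
vanishing outside {0..a}. Scalars act on the left.\<close>

definition vecs :: "nat \<Rightarrow> (nat \<Rightarrow> 'k::division_ring) set" where
  "vecs a = {v. \<forall>i>a. v i = 0}"

definition lin_comb :: "(nat \<Rightarrow> 'k::division_ring) list \<Rightarrow> (nat \<Rightarrow> 'k) \<Rightarrow> (nat \<Rightarrow> 'k)" where
  "lin_comb vs c = (\<lambda>i. \<Sum>j<length vs. c j * (vs ! j) i)"

definition lspan :: "(nat \<Rightarrow> 'k::division_ring) list \<Rightarrow> (nat \<Rightarrow> 'k) set" where
  "lspan vs = {lin_comb vs c | c. True}"

definition lin_indep :: "(nat \<Rightarrow> 'k::division_ring) list \<Rightarrow> bool" where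
  "lin_indep vs \<longleftrightarrow> (\<forall>c. lin_comb vs c = (\<lambda>i. 0) \<longrightarrow> (\<forall>j<length vs. c j = 0))"

text \<open>U is an m-space of PG(a,L) (projective dimension m, m >= -1): a vector
subspace of the ambient space with a basis of m+1 vectors. The empty subspace
is the zero vector subspace, of dimension -1.\<close>

definition pg_space :: "nat \<Rightarrow> int \<Rightarrow> (nat \<Rightarrow> 'k::division_ring) set \<Rightarrow> bool" where
  "pg_space a m U \<longleftrightarrow> m \<ge> -1 \<and>
     (\<exists>vs. length vs = nat (m + 1) \<and> set vs \<subseteq> vecs a \<and> lin_indep vs \<and> U = lspan vs)"

definition is_pg_subspace :: "nat \<Rightarrow> (nat \<Rightarrow> 'k::division_ring) set \<Rightarrow> bool" where
  "is_pg_subspace a U \<longleftrightarrow> (\<exists>m. pg_space a m U)"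

definition pg_points :: "nat \<Rightarrow> (nat \<Rightarrow> 'k::division_ring) set \<Rightarrow> (nat \<Rightarrow> 'k) set set" where
  "pg_points a U = {P. pg_space a 0 P \<and> P \<subseteq> U}"

end

theory Submission
  imports Defs
begin

lemma lin_comb_Cons: "lin_comb (w#ws) c = (\<lambda>i. c 0 * w i + lin_comb ws (\<lambda>j. c (Suc j)) i)"
  unfolding lin_comb_def by (simp add: sum.lessThan_Suc_shift del: sum.lessThan_Suc)

lemma lspan_Nil: "lspan [] = {\<lambda>i. 0}"
  unfolding lspan_def lin_comb_def by simp

lemma lspan_Cons: "x \<in> lspan (w#ws) \<longleftrightarrow> (\<exists>t y. y \<in> lspan ws \<and> x = (\<lambda>i. t * w i + y i))"
proof
  assume "x \<in> lspan (w#ws)"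
  then obtain c where "x = lin_comb (w#ws) c" unfolding lspan_def by blast
  then show "\<exists>t y. y \<in> lspan ws \<and> x = (\<lambda>i. t * w i + y i)"
    unfolding lin_comb_Cons lspan_def by blast
next
  assume "\<exists>t y. y \<in> lspan ws \<and> x = (\<lambda>i. t * w i + y i)"
  then obtain t d where "x = (\<lambda>i. t * w i + lin_comb ws d i)" unfolding lspan_def by blast
  then have "x = lin_comb (w#ws) (case_nat t d)" unfolding lin_comb_Cons by simp
  then show "x \<in> lspan (w#ws)" unfolding lspan_def by blast
qed

lemma lin_comb_smul: "lin_comb ws (\<lambda>j. s * d j) = (\<lambda>i. s * lin_comb ws d i)"
  unfolding lin_comb_def by (simp add: sum_distrib_left mult.assoc)

lemma lin_indep_Nil: "lin_indep []"
  by (simp add: lin_indep_def)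

lemma lin_indep_Cons: "lin_indep (w#ws) \<longleftrightarrow> lin_indep ws \<and> w \<notin> lspan ws"
proof
  assume L: "lin_indep (w#ws)"
  show "lin_indep ws \<and> w \<notin> lspan ws"
  proof
    show "lin_indep ws" unfolding lin_indep_def
    proof (intro allI impI)
      fix d j assume d: "lin_comb ws d = (\<lambda>i. 0)" and j: "j < length ws"
      have "lin_comb (w#ws) (case_nat 0 d) = (\<lambda>i. 0)" using d unfolding lin_comb_Cons
        by (simp add: fun_eq_iff)
      then have "case_nat 0 d (Suc j) = 0" using L j unfolding lin_indep_def
        by (metis Suc_less_eq length_Cons)
      then show "d j = 0" by simp
    qed
    show "w \<notin> lspan ws"
    proof
      assume "w \<in> lspan ws"
      then obtain d where d: "w = lin_comb ws d" unfolding lspan_def by blast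
      have "lin_comb (w#ws) (case_nat (-1) d) = (\<lambda>i. 0)" unfolding lin_comb_Cons
        using d by (simp add: fun_eq_iff)
      then have "case_nat (-1) d 0 = (0::'a)" using L unfolding lin_indep_def by fastforce
      then show False by simp
    qed
  qed
next
  assume A: "lin_indep ws \<and> w \<notin> lspan ws"
  show "lin_indep (w#ws)" unfolding lin_indep_def
  proof (intro allI impI)
    fix c j assume c: "lin_comb (w#ws) c = (\<lambda>i. 0)" and j: "j < length (w#ws)"
    have eq: "\<And>i. c 0 * w i + lin_comb ws (\<lambda>j. c (Suc j)) i = 0"
      using c unfolding lin_comb_Cons by (simp add: fun_eq_iff)
    have c0: "c 0 = 0"
    proof (rule ccontr)
      assume nz: "c 0 \<noteq> 0"
      have "w = lin_comb ws (\<lambda>j. (- inverse (c 0)) * c (Suc j))"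
      proof
        fix i
        have "c 0 * w i = - lin_comb ws (\<lambda>j. c (Suc j)) i" using eq[of i]
          by (simp add: eq_neg_iff_add_eq_0)
        then have "inverse (c 0) * (c 0 * w i) = inverse (c 0) * (- lin_comb ws (\<lambda>j. c (Suc j)) i)"
          by simp
        then show "w i = lin_comb ws (\<lambda>j. (- inverse (c 0)) * c (Suc j)) i"
          using nz unfolding lin_comb_smul by (simp add: mult.assoc[symmetric])
      qed
      then show False using A unfolding lspan_def by blast
    qed
    then have "lin_comb ws (\<lambda>j. c (Suc j)) = (\<lambda>i. 0)" using eq by (simp add: fun_eq_iff)
    then have "\<forall>k<length ws. c (Suc k) = 0" using A unfolding lin_indep_def by blast
    then show "c j = 0" using c0 j by (cases j) auto
  qed
qed

lemma lspan_zero: "(\<lambda>i. 0) \<in> lspan ws"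
  by (induction ws) (auto simp: lspan_Nil lspan_Cons intro!: exI[of _ 0])

lemma lspan_add: "x \<in> lspan ws \<Longrightarrow> y \<in> lspan ws \<Longrightarrow> (\<lambda>i. x i + y i) \<in> lspan ws"
proof (induction ws arbitrary: x y)
  case Nil then show ?case by (simp add: lspan_Nil)
next
  case (Cons w ws)
  from Cons.prems obtain t1 y1 t2 y2 where "y1 \<in> lspan ws" "x = (\<lambda>i. t1 * w i + y1 i)"
    "y2 \<in> lspan ws" "y = (\<lambda>i. t2 * w i + y2 i)" by (auto simp: lspan_Cons)
  moreover have "(\<lambda>i. (t1 * w i + y1 i) + (t2 * w i + y2 i)) = (\<lambda>i. (t1 + t2) * w i + (y1 i + y2 i))"
    by (simp add: fun_eq_iff algebra_simps)
  ultimately show ?case using Cons.IH by (auto simp: lspan_Cons)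
qed

lemma lspan_smul: "x \<in> lspan ws \<Longrightarrow> (\<lambda>i. s * x i) \<in> lspan ws"
proof (induction ws arbitrary: x)
  case Nil then show ?case by (simp add: lspan_Nil)
next
  case (Cons w ws)
  from Cons.prems obtain t y where "y \<in> lspan ws" "x = (\<lambda>i. t * w i + y i)"
    by (auto simp: lspan_Cons)
  moreover have "(\<lambda>i. s * (t * w i + y i)) = (\<lambda>i. (s * t) * w i + s * y i)"
    by (simp add: fun_eq_iff algebra_simps)
  ultimately show ?case using Cons.IH by (auto simp: lspan_Cons)
qed

lemma lspan_sub: "x \<in> lspan ws \<Longrightarrow> y \<in> lspan ws \<Longrightarrow> (\<lambda>i. x i - y i) \<in> lspan ws"
proof -
  assume "x \<in> lspan ws" "y \<in> lspan ws"
  then have "(\<lambda>i. x i + (-1) * y i) \<in> lspan ws" by (intro lspan_add lspan_smul)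
  then show ?thesis by simp
qed

lemma lspan_cancel1: "(\<lambda>i. x i + y i) \<in> lspan ws \<Longrightarrow> y \<in> lspan ws \<Longrightarrow> x \<in> lspan ws"
  using lspan_sub[of "\<lambda>i. x i + y i" ws y] by simp

lemma lspan_cancel2: "(\<lambda>i. x i + y i) \<in> lspan ws \<Longrightarrow> x \<in> lspan ws \<Longrightarrow> y \<in> lspan ws"
  using lspan_sub[of "\<lambda>i. x i + y i" ws x] by simp

lemma lspan_elem: "w \<in> set ws \<Longrightarrow> w \<in> lspan ws"
proof (induction ws)
  case Nil then show ?case by simp
next
  case (Cons u us)
  show ?case
  proof (cases "w = u")
    case True
    have "w = (\<lambda>i. 1 * u i + 0)" using True by simp
    then show ?thesis using lspan_zero[of us] unfolding lspan_Cons by fastforce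
  next
    case False
    then have "w \<in> lspan us" using Cons by simp
    moreover have "w = (\<lambda>i. 0 * u i + w i)" by simp
    ultimately show ?thesis unfolding lspan_Cons by blast
  qed
qed

lemma lspan_least:
  assumes "set ws \<subseteq> lspan vs" shows "lspan ws \<subseteq> lspan vs"
  using assms
proof (induction ws)
  case Nil then show ?case by (simp add: lspan_Nil lspan_zero)
next
  case (Cons w ws)
  show ?case
  proof
    fix x assume "x \<in> lspan (w#ws)"
    then obtain t y where "y \<in> lspan ws" "x = (\<lambda>i. t * w i + y i)" by (auto simp: lspan_Cons)
    moreover have "y \<in> lspan vs" using Cons calculation by auto
    moreover have "(\<lambda>i. t * w i) \<in> lspan vs" using Cons.prems by (intro lspan_smul) auto
    ultimately show "x \<in> lspan vs" using lspan_add by blast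
  qed
qed

lemma lspan_mono: "set ws \<subseteq> set vs \<Longrightarrow> lspan ws \<subseteq> lspan vs"
  by (meson lspan_elem lspan_least subset_iff)

lemma lspan_solve:
  assumes "y = (\<lambda>i. t * x i + w i)" "t \<noteq> 0" "y \<in> lspan vs" "w \<in> lspan vs"
  shows "x \<in> lspan vs"
proof -
  have e: "x = (\<lambda>i. inverse t * y i + (- inverse t) * w i)"
    using assms(1,2) by (simp add: fun_eq_iff algebra_simps mult.assoc[symmetric])
  have "(\<lambda>i. inverse t * y i + (- inverse t) * w i) \<in> lspan vs"
    by (intro lspan_add lspan_smul assms(3,4))
  then show ?thesis by (subst e)
qed

lemma exchange:
  assumes "x \<in> lspan ws" "x \<noteq> (\<lambda>i. 0)"
  shows "\<exists>w\<in>set ws. w \<in> lspan (x # remove1 w ws)"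
  using assms
proof (induction ws)
  case Nil then show ?case by (simp add: lspan_Nil)
next
  case (Cons u us)
  from Cons.prems obtain t y where ty: "y \<in> lspan us" "x = (\<lambda>i. t * u i + y i)"
    by (auto simp: lspan_Cons)
  show ?case
  proof (cases "t = 0")
    case False
    have "x \<in> lspan (x # us)" by (simp add: lspan_elem)
    moreover have "y \<in> lspan (x # us)" using ty(1) lspan_mono[of us "x#us"] by auto
    ultimately have "u \<in> lspan (x # us)" using lspan_solve[OF ty(2) False] by blast
    then show ?thesis by simp
  next
    case True
    then have "x \<in> lspan us" using ty by simp
    then obtain w where w: "w \<in> set us" "w \<in> lspan (x # remove1 w us)" using Cons by blast
    have "set (x # remove1 w us) \<subseteq> set (x # remove1 w (u#us))"
      using set_remove1_subset[of w us] by auto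
    then have "w \<in> lspan (x # remove1 w (u#us))" using w(2) lspan_mono by blast
    then show ?thesis using w(1) by (metis list.set_intros(2))
  qed
qed

lemma proj:
  assumes "lin_indep ys" "x \<notin> lspan ys" "set ys \<subseteq> lspan (x # ws)"
  shows "\<exists>zs. length zs = length ys \<and> lin_indep zs \<and> set zs \<subseteq> lspan ws \<and>
    lspan (x # zs) = lspan (x # ys)"
  using assms
proof (induction ys)
  case Nil then show ?case by (intro exI[of _ "[]"]) (simp add: lin_indep_Nil)
next
  case (Cons y ys)
  have iy: "lin_indep ys" "y \<notin> lspan ys" using Cons.prems(1) by (auto simp: lin_indep_Cons)
  have "x \<notin> lspan ys" using Cons.prems(2) lspan_mono[of ys "y#ys"] by auto
  then obtain zs where zs: "length zs = length ys" "lin_indep zs" "set zs \<subseteq> lspan ws"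
    "lspan (x # zs) = lspan (x # ys)" using Cons iy by auto
  have "y \<in> lspan (x # ws)" using Cons.prems(3) by auto
  then obtain s z where sz: "z \<in> lspan ws" "y = (\<lambda>i. s * x i + z i)" by (auto simp: lspan_Cons)
  have zeq: "z = (\<lambda>i. y i - s * x i)" using sz(2) by (simp add: fun_eq_iff)
  have znot: "z \<notin> lspan zs"
  proof
    assume "z \<in> lspan zs"
    then have "y \<in> lspan (x # zs)" using sz(2) unfolding lspan_Cons by blast
    then have "y \<in> lspan (x # ys)" using zs(4) by simp
    then obtain t w where tw: "w \<in> lspan ys" "y = (\<lambda>i. t * x i + w i)" by (auto simp: lspan_Cons)
    show False
    proof (cases "t = 0")
      case True then show False using tw iy(2) by simp
    next
      case False
      have "y \<in> lspan (y#ys)" by (simp add: lspan_elem)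
      moreover have "w \<in> lspan (y#ys)" using tw(1) lspan_mono[of ys "y#ys"] by auto
      ultimately have "x \<in> lspan (y#ys)" using lspan_solve[OF tw(2) False] by blast
      then show False using Cons.prems(2) by simp
    qed
  qed
  have s1: "lspan (x # z # zs) \<subseteq> lspan (x # y # ys)"
  proof (rule lspan_least)
    have "x \<in> lspan (x # y # ys)" "y \<in> lspan (x # y # ys)" by (auto simp: lspan_elem)
    then have "z \<in> lspan (x # y # ys)" unfolding zeq by (intro lspan_sub lspan_smul)
    moreover have "set zs \<subseteq> lspan (x # y # ys)"
      using lspan_elem[of _ "x#zs"] zs(4) lspan_mono[of "x#ys" "x#y#ys"] by auto
    ultimately show "set (x # z # zs) \<subseteq> lspan (x # y # ys)" using \<open>x \<in> lspan (x # y # ys)\<close> by auto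
  qed
  have s2: "lspan (x # y # ys) \<subseteq> lspan (x # z # zs)"
  proof (rule lspan_least)
    have "x \<in> lspan (x # z # zs)" "z \<in> lspan (x # z # zs)" by (auto simp: lspan_elem)
    then have "y \<in> lspan (x # z # zs)" unfolding sz(2) by (intro lspan_add lspan_smul)
    moreover have "set ys \<subseteq> lspan (x # z # zs)"
      using lspan_elem[of _ "x#ys"] zs(4) lspan_mono[of "x#zs" "x#z#zs"] by auto
    ultimately show "set (x # y # ys) \<subseteq> lspan (x # z # zs)" using \<open>x \<in> lspan (x # z # zs)\<close> by auto
  qed
  show ?case
    using zs sz(1) znot s1 s2 by (intro exI[of _ "z # zs"]) (auto simp: lin_indep_Cons)
qed

lemma steinitz:
  assumes "lin_indep xs" "set xs \<subseteq> lspan ws"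
  shows "length xs \<le> length ws"
  using assms
proof (induction "length xs" arbitrary: xs ws)
  case 0 then show ?case by simp
next
  case (Suc n xs0)
  then obtain x xs where xs0: "xs0 = x # xs" by (cases xs0) auto
  note Cons = Suc[unfolded xs0]
  have i: "lin_indep xs" "x \<notin> lspan xs" using Cons(3) by (auto simp: lin_indep_Cons)
  have x0: "x \<noteq> (\<lambda>i. 0)" using i(2) lspan_zero by metis
  obtain w where w: "w \<in> set ws" "w \<in> lspan (x # remove1 w ws)"
    using exchange[OF _ x0, of ws] Cons(4) by auto
  have "set ws \<subseteq> lspan (x # remove1 w ws)"
  proof
    fix u assume "u \<in> set ws"
    then show "u \<in> lspan (x # remove1 w ws)"
      using w(2) by (cases "u = w") (auto intro: lspan_elem)
  qed
  then have "lspan ws \<subseteq> lspan (x # remove1 w ws)" by (rule lspan_least)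
  then have "set xs \<subseteq> lspan (x # remove1 w ws)" using Cons(4) by auto
  then obtain zs where zs: "length zs = length xs" "lin_indep zs" "set zs \<subseteq> lspan (remove1 w ws)"
    using proj[OF i] by blast
  have "length xs \<le> length (remove1 w ws)" using Cons(1)[of zs] zs Cons(2) by simp
  moreover have "length (remove1 w ws) = length ws - 1" using w(1) by (simp add: length_remove1)
  moreover have "length ws \<ge> 1" using w(1) by (cases ws) auto
  ultimately show ?case using xs0 by simp
qed

definition uvec :: "nat \<Rightarrow> nat \<Rightarrow> 'k::division_ring" where
  "uvec j = (\<lambda>i. if i = j then 1 else 0)"

lemma uvecs_indep: "lin_indep (map uvec [0..<n] :: (nat \<Rightarrow> 'k::division_ring) list)"
  unfolding lin_indep_def
proof (intro allI impI)
  fix c :: "nat \<Rightarrow> 'k" and j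
  assume c: "lin_comb (map uvec [0..<n]) c = (\<lambda>i. 0)" and j: "j < length (map uvec [0..<n] :: (nat \<Rightarrow> 'k) list)"
  have "lin_comb (map uvec [0..<n]) c j = (\<Sum>k<n. c k * (if j = k then 1 else 0))"
    unfolding lin_comb_def uvec_def by simp
  also have "\<dots> = c j" using j by (simp add: if_distrib cong: if_cong)
  finally show "c j = 0" using c by simp
qed

lemma outside:
  assumes "length ws \<le> a"
  shows "\<exists>v\<in>vecs a. v \<notin> lspan (ws :: (nat \<Rightarrow> 'k::division_ring) list)"
proof (rule ccontr)
  assume "\<not> ?thesis"
  then have "vecs a \<subseteq> lspan ws" by blast
  moreover have "set (map uvec [0..<Suc a] :: (nat \<Rightarrow> 'k) list) \<subseteq> vecs a"
    by (auto simp: vecs_def uvec_def)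
  ultimately have "length (map uvec [0..<Suc a] :: (nat \<Rightarrow> 'k) list) \<le> length ws"
    using steinitz[OF uvecs_indep] by blast
  then show False using assms by simp
qed

lemma vecs_add: "x \<in> vecs a \<Longrightarrow> y \<in> vecs a \<Longrightarrow> (\<lambda>i. x i + y i) \<in> vecs a"
  by (simp add: vecs_def)

lemma avoid2:
  assumes "length s \<le> a" "length t \<le> a"
  shows "\<exists>v\<in>vecs a. v \<notin> lspan s \<and> v \<notin> lspan (t :: (nat \<Rightarrow> 'k::division_ring) list)"
proof -
  obtain x where x: "x \<in> vecs a" "x \<notin> lspan s" using outside[OF assms(1)] by blast
  obtain y where y: "y \<in> vecs a" "y \<notin> lspan t" using outside[OF assms(2)] by blast
  show ?thesis
  proof (cases "x \<in> lspan t")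
    case xt: True
    show ?thesis
    proof (cases "y \<in> lspan s")
      case True
      have "(\<lambda>i. x i + y i) \<notin> lspan s" using lspan_cancel1 True x(2) by blast
      moreover have "(\<lambda>i. x i + y i) \<notin> lspan t" using lspan_cancel2 xt y(2) by blast
      ultimately show ?thesis using vecs_add x(1) y(1) by blast
    next
      case False then show ?thesis using y by blast
    qed
  next
    case False then show ?thesis using x by blast
  qed
qed

lemma fixup:
  assumes "P \<in> vecs a" "R \<in> vecs a" "P \<notin> lspan h" "P \<in> lspan p" "R \<notin> lspan p"
    "R \<notin> lspan (P # d)" "R \<notin> lspan (P # q)"
  shows "\<exists>v\<in>vecs a. v \<notin> lspan h \<and> v \<notin> lspan p \<and> v \<notin> lspan q \<and> v \<notin> lspan d"
proof -
  have dq: "lspan d \<subseteq> lspan (P # d)" "lspan q \<subseteq> lspan (P # q)" by (auto intro!: lspan_mono)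
  have P: "P \<in> lspan (P # d)" "P \<in> lspan (P # q)" by (auto intro: lspan_elem)
  show ?thesis
  proof (cases "R \<in> lspan h")
    case False then show ?thesis using assms dq by blast
  next
    case True
    let ?v = "\<lambda>i. R i + P i"
    have "?v \<notin> lspan h" using lspan_cancel2 True assms(3) by blast
    moreover have "?v \<notin> lspan p" using lspan_cancel1 assms(4,5) by blast
    moreover have "?v \<notin> lspan d" using lspan_cancel1 P(1) dq(1) assms(6) by blast
    moreover have "?v \<notin> lspan q" using lspan_cancel1 P(2) dq(2) assms(7) by blast
    ultimately show ?thesis using vecs_add assms(1,2) by blast
  qed
qed

lemma L3:
  assumes "length h \<le> a" "Suc (length p) \<le> a" "Suc (length d) \<le> a"
  shows "\<exists>v\<in>vecs a. v \<notin> lspan h \<and> v \<notin> lspan p \<and> v \<notin> lspan (d :: (nat \<Rightarrow> 'k::division_ring) list)"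
proof -
  obtain P where P: "P \<in> vecs a" "P \<notin> lspan h" "P \<notin> lspan d" using avoid2[OF assms(1), of d] assms by auto
  show ?thesis
  proof (cases "P \<in> lspan p")
    case False then show ?thesis using P by blast
  next
    case True
    obtain R where R: "R \<in> vecs a" "R \<notin> lspan p" "R \<notin> lspan (P # d)"
      using avoid2[of p a "P # d"] assms by auto
    have "lspan [P] \<subseteq> lspan (P # d)" by (auto intro!: lspan_mono)
    then have "R \<notin> lspan (P # [])" using R by auto
    from fixup[OF P(1) R(1) P(2) True R(2) R(3) this] show ?thesis by blast
  qed
qed

lemma L4core:
  assumes "length h \<le> a" "Suc (length p) \<le> a" "Suc (length q) \<le> a" "Suc (Suc (length d)) \<le> a"
    "P \<in> vecs a" "P \<notin> lspan h" "P \<in> lspan p"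
  shows "\<exists>v\<in>vecs a. v \<notin> lspan h \<and> v \<notin> lspan p \<and> v \<notin> lspan q \<and> v \<notin> lspan (d :: (nat \<Rightarrow> 'k::division_ring) list)"
proof -
  obtain R where R: "R \<in> vecs a" "R \<notin> lspan (P # q)" "R \<notin> lspan p" "R \<notin> lspan (P # d)"
    using L3[of "P # q" a p "P # d"] assms by auto
  from fixup[OF assms(5) R(1) assms(6,7) R(3) R(4) R(2)] show ?thesis .
qed

lemma L4:
  assumes "length h \<le> a" "Suc (length p) \<le> a" "Suc (length q) \<le> a" "Suc (Suc (length d)) \<le> a"
  shows "\<exists>v\<in>vecs a. v \<notin> lspan h \<and> v \<notin> lspan p \<and> v \<notin> lspan q \<and> v \<notin> lspan (d :: (nat \<Rightarrow> 'k::division_ring) list)"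
proof -
  obtain P where P: "P \<in> vecs a" "P \<notin> lspan h" "P \<notin> lspan d" using avoid2[OF assms(1), of d] assms by auto
  show ?thesis
  proof (cases "P \<in> lspan p")
    case True then show ?thesis using L4core[OF assms P(1,2)] by blast
  next
    case np: False
    show ?thesis
    proof (cases "P \<in> lspan q")
      case True then show ?thesis using L4core[OF assms(1,3,2,4) P(1,2)] by blast
    next
      case False then show ?thesis using P np by blast
    qed
  qed
qed

definition disj :: "(nat \<Rightarrow> 'k::division_ring) list \<Rightarrow> (nat \<Rightarrow> 'k) list \<Rightarrow> bool" where
  "disj c u \<longleftrightarrow> lspan c \<inter> lspan u \<subseteq> {\<lambda>i. 0}"

lemma disj_step:
  assumes "disj c u" "v \<notin> lspan (c @ u)"
  shows "disj (v # c) u"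
  unfolding disj_def
proof
  fix x assume "x \<in> lspan (v # c) \<inter> lspan u"
  then obtain t y where ty: "y \<in> lspan c" "x = (\<lambda>i. t * v i + y i)" "x \<in> lspan u"
    by (auto simp: lspan_Cons)
  have m: "lspan c \<subseteq> lspan (c @ u)" "lspan u \<subseteq> lspan (c @ u)" by (auto intro!: lspan_mono)
  show "x \<in> {\<lambda>i. 0}"
  proof (cases "t = 0")
    case False
    then have "v \<in> lspan (c @ u)" using lspan_solve[OF ty(2) False] ty m by blast
    then show ?thesis using assms(2) by blast
  next
    case True
    then have "x = y" using ty by simp
    then show ?thesis using ty assms(1) unfolding disj_def by blast
  qed
qed

lemma build:
  assumes "length u0 = Suc b" "length u1 \<le> b" "length u2 \<le> b"
    "Suc (length u3) \<le> b \<or> (u1 = [] \<and> u2 = [] \<and> u3 = [])"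
  shows "j + b + 1 \<le> a + 1 \<Longrightarrow> \<exists>c. length c = j \<and> set c \<subseteq> vecs a \<and> lin_indep c \<and>
     disj c u0 \<and> disj c u1 \<and> disj c u2 \<and> disj (c :: (nat \<Rightarrow> 'k::division_ring) list) u3"
proof (induction j)
  case 0
  show ?case by (intro exI[of _ "[]"]) (simp add: lin_indep_Nil disj_def lspan_Nil)
next
  case (Suc j)
  then obtain c where c: "length c = j" "set c \<subseteq> vecs a" "lin_indep c"
     "disj c u0" "disj c u1" "disj c u2" "disj c u3" by auto
  have ja: "j + b + 1 \<le> a" using Suc.prems by simp
  have "\<exists>v\<in>vecs a. v \<notin> lspan (c @ u0) \<and> v \<notin> lspan (c @ u1) \<and> v \<notin> lspan (c @ u2) \<and> v \<notin> lspan (c @ u3)"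
  proof (cases "Suc (length u3) \<le> b")
    case True
    show ?thesis by (rule L4) (use ja True assms c(1) in auto)
  next
    case False
    then have e: "u1 = []" "u2 = []" "u3 = []" using assms(4) by auto
    obtain v where v: "v \<in> vecs a" "v \<notin> lspan (c @ u0)" using outside[of "c @ u0" a] ja assms c(1) by auto
    have "lspan c \<subseteq> lspan (c @ u0)" by (auto intro!: lspan_mono)
    then show ?thesis using v e by auto
  qed
  then obtain v where v: "v \<in> vecs a" "v \<notin> lspan (c @ u0)" "v \<notin> lspan (c @ u1)"
    "v \<notin> lspan (c @ u2)" "v \<notin> lspan (c @ u3)" by blast
  have "lspan c \<subseteq> lspan (c @ u0)" by (auto intro!: lspan_mono)
  then have "lin_indep (v # c)" using v(2) c(3) by (auto simp: lin_indep_Cons)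
  then show ?case using c v disj_step by (intro exI[of _ "v # c"]) auto
qed

lemma disj_points:
  assumes "disj c u"
  shows "pg_points a (lspan c) \<inter> pg_points a (lspan u) = {}"
proof (rule ccontr)
  assume "\<not> ?thesis"
  then obtain P where P: "pg_space a 0 P" "P \<subseteq> lspan c" "P \<subseteq> lspan u"
    unfolding pg_points_def by blast
  then obtain vs where vs: "length vs = 1" "lin_indep vs" "P = lspan vs"
    unfolding pg_space_def by auto
  then obtain p where p: "vs = [p]" by (cases vs) auto
  have "p \<notin> lspan []" using vs(2) p by (simp add: lin_indep_Cons)
  then have "p \<noteq> (\<lambda>i. 0)" by (simp add: lspan_Nil)
  moreover have "p \<in> P" using vs(3) p by (simp add: lspan_elem)
  ultimately show False using P assms unfolding disj_def by blast
qed

theorem lemma3p1: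
  fixes a b :: nat and m1 m2 m3 :: int
    and B B1 B2 B3 :: "(nat \<Rightarrow> 'k::division_ring) set"
  assumes "a \<ge> 2" and "b < a"
    and "pg_space a (int b) B"
    and "pg_space a m1 B1" and "m1 \<le> int b - 1"
    and "pg_space a m2 B2" and "m2 \<le> int b - 1"
    and "pg_space a m3 B3" and "m3 \<le> max (int b - 2) (-1)"
  shows "\<exists>C. pg_space a (int a - int b - 1) C \<and>
    pg_points a C \<inter> (pg_points a B \<union> pg_points a B1 \<union> pg_points a B2 \<union> pg_points a B3) = {}"
proof -
  have nb: "nat (int b + 1) = Suc b" by simp
  obtain u0 where u0: "length u0 = Suc b" "B = lspan u0"
    using assms(3) unfolding pg_space_def nb by blast
  obtain u1 where u1: "length u1 = nat (m1 + 1)" "B1 = lspan u1" "m1 \<ge> -1"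
    using assms(4) unfolding pg_space_def by auto
  obtain u2 where u2: "length u2 = nat (m2 + 1)" "B2 = lspan u2" "m2 \<ge> -1"
    using assms(6) unfolding pg_space_def by auto
  obtain u3 where u3: "length u3 = nat (m3 + 1)" "B3 = lspan u3" "m3 \<ge> -1"
    using assms(8) unfolding pg_space_def by auto
  have l1: "length u1 \<le> b" using u1 assms(5) by simp
  have l2: "length u2 \<le> b" using u2 assms(7) by simp
  have l3: "Suc (length u3) \<le> b \<or> (u1 = [] \<and> u2 = [] \<and> u3 = [])"
  proof (cases "b = 0")
    case True
    then show ?thesis using u1 u2 u3 assms(5,7,9) by auto
  next
    case False
    then show ?thesis using u3 assms(9) by auto
  qed
  obtain c :: "(nat \<Rightarrow> 'k) list" where c: "length c = a - b" "set c \<subseteq> vecs a" "lin_indep c"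
     "disj c u0" "disj c u1" "disj c u2" "disj c u3"
    using build[OF u0(1) l1 l2 l3, of "a - b" a] assms(2) by auto
  have "pg_space a (int a - int b - 1) (lspan c)"
    unfolding pg_space_def using c assms(2) by (intro conjI exI[of _ c]) auto
  moreover have "pg_points a (lspan c) \<inter> (pg_points a B \<union> pg_points a B1 \<union> pg_points a B2 \<union> pg_points a B3) = {}"
    using disj_points[OF c(4), of a] disj_points[OF c(5), of a] disj_points[OF c(6), of a]
      disj_points[OF c(7), of a] u0 u1 u2 u3 by blast
  ultimately show ?thesis by blast
qed

end
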